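(* For $(\eta,\zeta,\tau)\in\mathbb R^3$ with $\tau\ne0$ let $T_1(\eta,\zeta,\tau):=\dfrac{w^3}{\tau^2}+\dfrac{27}{4}$, where $w:=(\eta+i)^2+(\zeta+i)^2$. There exists a compact set $K\subset\mathbb R^3$ such that $|T_1(\eta,\zeta,\tau)|\ge\frac{27}{8}$ for all $(\eta,\zeta,\tau)\in\mathbb R^3\setminus K$ with $\tau\neq0$. *)

theory Defs
  imports "HOL-Analysis.Analysis"
begin

definition T1 :: "real \<Rightarrow> real \<Rightarrow> real \<Rightarrow> complex" where
  "T1 \<eta> \<zeta> \<tau> =
     (let w = (complex_of_real \<eta> + \<i>)^2 + (complex_of_real \<zeta> + \<i>)^2
      in w^3 / (complex_of_real \<tau>)^2 + 27/4)"

end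

theory Submission
  imports Defs
begin

lemma w_eq: "(complex_of_real \<eta> + \<i>)^2 + (complex_of_real \<zeta> + \<i>)^2
   = Complex (\<eta>^2+\<zeta>^2-2) (2*(\<eta>+\<zeta>))"
  by (simp add: complex_eq_iff power2_eq_square algebra_simps)

lemma cube_Re: "Re ((Complex a b)^3) = a^3 - 3*a*b^2"
  by (simp add: power3_eq_cube power2_eq_square algebra_simps)

lemma key:
  fixes \<eta> \<zeta> \<tau> :: real
  assumes t: "\<tau> \<noteq> 0" and c: "cmod (T1 \<eta> \<zeta> \<tau>) < 27/8"
  shows "\<eta>^2+\<zeta>^2+\<tau>^2 \<le> 10000"
proof -
  define a where "a = \<eta>^2+\<zeta>^2-2"
  define b where "b = 2*(\<eta>+\<zeta>)"
  define w where "w = Complex a b"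
  define u where "u = w^3 / (complex_of_real \<tau>)^2"
  have T: "T1 \<eta> \<zeta> \<tau> = u + 27/4"
    unfolding T1_def u_def w_def a_def b_def using w_eq by (simp add: Let_def)
  have "Re (u + 27/4) \<le> cmod (u+27/4)" using abs_Re_le_cmod[of "u+27/4"] by linarith
  hence Reu: "Re u < 0" using c T by simp
  have "cmod (27/4 :: complex) \<le> cmod (u + 27/4) + cmod u"
    using norm_triangle_ineq4[of "u+27/4" u] by simp
  hence cu: "cmod u \<ge> 27/8" using c T by simp
  have tp: "\<tau>^2 > 0" using t by simp
  have "Re u = Re (w^3) / \<tau>^2"
  proof -
    have "u = w^3 / complex_of_real (\<tau>^2)" unfolding u_def by simp
    thus ?thesis by (simp only: Re_divide_of_real)
  qed
  hence "Re (w^3) < 0" using Reu tp by (simp add: divide_less_0_iff)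
  hence r3: "a^3 - 3*a*b^2 < 0" unfolding w_def cube_Re .
  have bb: "b^2 \<le> 8*(a+2)"
  proof -
    have "(\<eta>-\<zeta>)^2 \<ge> 0" by simp
    thus ?thesis unfolding a_def b_def by (simp add: power2_eq_square algebra_simps)
  qed
  have a2: "a \<ge> -2" unfolding a_def using zero_le_power2[of \<eta>] zero_le_power2[of \<zeta>] by linarith
  have a26: "a < 26"
  proof (rule ccontr)
    assume "\<not> a < 26"
    hence ap: "a \<ge> 26" by simp
    have "a*(a^2 - 3*b^2) < 0" using r3 by (simp add: algebra_simps power3_eq_cube power2_eq_square)
    hence "a^2 < 3*b^2" using ap by (simp add: mult_less_0_iff)
    also have "... \<le> 24*a + 48" using bb by simp
    finally have "a^2 < 24*a+48" .
    moreover have "a^2 \<ge> 26*a" using ap by (simp add: power2_eq_square)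
    ultimately show False using ap by linarith
  qed
  have "8*(a+2) \<le> 224" using a26 by simp
  hence b2: "b^2 \<le> 224" using bb by linarith
  have a2b: "a^2 \<le> 676"
  proof -
    have "\<bar>a\<bar> \<le> 26" using a26 a2 by linarith
    hence "\<bar>a\<bar>^2 \<le> 26^2" by (intro power_mono) auto
    thus ?thesis by simp
  qed
  have "(cmod w)^2 = a^2 + b^2" unfolding w_def by (simp add: cmod_def)
  hence cw2: "(cmod w)^2 \<le> 900" using b2 a2b by linarith
  have cw: "cmod w \<le> 30"
  proof -
    have "(cmod w)^2 \<le> 30^2" using cw2 by simp
    from power2_le_imp_le[OF this] show ?thesis by simp
  qed
  have "cmod u = (cmod w)^3 / \<tau>^2"
    unfolding u_def by (simp add: norm_divide norm_power)
  hence "(cmod w)^3 / \<tau>^2 \<ge> 27/8" using cu by simp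
  hence "27/8 * \<tau>^2 \<le> (cmod w)^3" using tp by (simp add: le_divide_eq)
  moreover have "(cmod w)^3 \<le> 27000"
  proof -
    have "(cmod w)^3 \<le> 30^3" using cw by (intro power_mono) auto
    thus ?thesis by simp
  qed
  ultimately have "\<tau>^2 \<le> 8000" by linarith
  moreover have "\<eta>^2+\<zeta>^2 < 28" using a26 unfolding a_def by simp
  ultimately show ?thesis by linarith
qed

theorem mainTheorem7:
  shows "\<exists>K :: (real \<times> real \<times> real) set. compact K \<and>
     (\<forall>\<eta> \<zeta> \<tau>. (\<eta>, \<zeta>, \<tau>) \<notin> K \<longrightarrow> \<tau> \<noteq> 0 \<longrightarrow>
        cmod (T1 \<eta> \<zeta> \<tau>) \<ge> 27/8)"
proof (intro exI[of _ "cball 0 100"] conjI allI impI)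
  show "compact (cball (0::real\<times>real\<times>real) 100)" by simp
  fix \<eta> \<zeta> \<tau> :: real
  assume n: "(\<eta>, \<zeta>, \<tau>) \<notin> cball 0 100" and t: "\<tau> \<noteq> 0"
  show "cmod (T1 \<eta> \<zeta> \<tau>) \<ge> 27/8"
  proof (rule ccontr)
    assume "\<not> ?thesis"
    hence "\<eta>^2+\<zeta>^2+\<tau>^2 \<le> 10000" using key t by simp
    hence "sqrt (\<eta>^2+(\<zeta>^2+\<tau>^2)) \<le> sqrt (100^2)"
      by (intro real_sqrt_le_mono) simp
    hence "norm (\<eta>, \<zeta>, \<tau>) \<le> 100"
      by (simp add: norm_Pair)
    thus False using n by simp
  qed
qed

end
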